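(* Let $X$ be a compact subset of a symplectic manifold $(M,\omega)$, and let $(X_n)$ be a decreasing sequence of compact sets ($X_{n+1}\subseteq X_n$), each containing $X$, converging to $X$ in the Hausdorff distance. Let $\alpha\in H^1(X;\mathbb Z)$, let $U_X\supset X$ be open and $\bar\alpha$ a homotopy class of continuous maps $U_X\to S^1$ restricting to $\alpha$ on $X$. Then (with $\bar\alpha|_{X_n}$ defined for all $n$ large enough that $X_n\subset U_X$) \[\lim_{n\to\infty}\mathrm{Pb}_{X_n}(\bar\alpha|_{X_n})=\mathrm{Pb}_X(\alpha).\]
   Context: $\{\cdot,\cdot\}$ is the Poisson bracket and $\|\cdot\|$ the supremum norm over $M$. For compact $X\subset M$, $H^1(X;\mathbb Z)$ (Čech cohomology) is identified with the group $[X:S^1]$ of homotopy classes of continuous maps $X\to S^1$. $\overline{B_1}\subset\mathbb R^2$ is the closed unit disc and $S^1=\partial\overline{B_1}$. For $\alpha\in H^1(X;\mathbb Z)$, $\mathrm{Pb}_X(\alpha)$ is the infimum of $\|\{\phi_1,\phi_2\}\|$ over smooth $\phi=(\phi_1,\phi_2):M\to\overline{B_1}$ with $\phi_1,\phi_2$ compactly supported and such that there is an open $U\supset X$ with $\phi(U)\subseteq S^1$ and $[\phi|_X]=\alpha$ (infimum of the empty set is $+\infty$). *)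

theory Defs
  imports "HOL-Analysis.Analysis"
begin

text \<open>C-infinity: differentiable, and all first partial derivatives are again C-infinity
  (greatest fixed point, i.e. derivatives of every order exist).\<close>
coinductive C_inf :: "'e::euclidean_space set \<Rightarrow> ('e \<Rightarrow> real) \<Rightarrow> bool" for S where
  "f differentiable_on S \<Longrightarrow>
   (\<forall>i\<in>Basis. C_inf S (\<lambda>x. frechet_derivative f (at x) i)) \<Longrightarrow> C_inf S f"

definition C_inf_vec :: "'e::euclidean_space set \<Rightarrow> ('e \<Rightarrow> 'f::euclidean_space) \<Rightarrow> bool" where
  "C_inf_vec S g \<longleftrightarrow> (\<forall>i\<in>Basis. C_inf S (\<lambda>x. g x \<bullet> i))"

type_synonym ('m,'e) chart = "'m set \<times> ('m \<Rightarrow> 'e)"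

definition is_chart :: "('m::topological_space, 'e::euclidean_space) chart \<Rightarrow> bool" where
  "is_chart c \<longleftrightarrow> (case c of (U, \<phi>) \<Rightarrow>
     open U \<and> open (\<phi> ` U) \<and> inj_on \<phi> U \<and> continuous_on U \<phi> \<and>
     continuous_on (\<phi> ` U) (inv_into U \<phi>))"

text \<open>Transition map from chart c to chart d, defined on the image under c of the overlap.\<close>
definition transition :: "('m, 'e) chart \<Rightarrow> ('m, 'e) chart \<Rightarrow> 'e \<Rightarrow> 'e" where
  "transition c d = snd d \<circ> inv_into (fst c) (snd c)"

definition smooth_atlas :: "('m::topological_space, 'e::euclidean_space) chart set \<Rightarrow> bool" where
  "smooth_atlas A \<longleftrightarrow> (\<forall>c\<in>A. is_chart c) \<and> (\<Union>c\<in>A. fst c) = UNIV \<and>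
     (\<forall>c\<in>A. \<forall>d\<in>A. C_inf_vec (snd c ` (fst c \<inter> fst d)) (transition c d))"

text \<open>A 2-form is given in every chart c by bilinear forms om c y (y in the chart image),
  compatible under transition maps (pullback).\<close>
definition symplectic_manifold ::
  "('m::topological_space, 'e::euclidean_space) chart set \<Rightarrow>
   (('m, 'e) chart \<Rightarrow> 'e \<Rightarrow> 'e \<Rightarrow> 'e \<Rightarrow> real) \<Rightarrow> bool" where
  "symplectic_manifold A om \<longleftrightarrow> smooth_atlas A \<and>
    (\<forall>c\<in>A. \<forall>y\<in>snd c ` fst c.
       (\<forall>u v. om c y u v = (\<Sum>i\<in>Basis. \<Sum>j\<in>Basis. (u \<bullet> i) * (v \<bullet> j) * om c y i j)) \<and>
       (\<forall>u v. om c y u v = - om c y v u) \<and>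
       (\<forall>u. u \<noteq> 0 \<longrightarrow> (\<exists>v. om c y u v \<noteq> 0)) \<and>
       (\<forall>i\<in>Basis. \<forall>j\<in>Basis. \<forall>k\<in>Basis.
          frechet_derivative (\<lambda>z. om c z j k) (at y) i
        + frechet_derivative (\<lambda>z. om c z k i) (at y) j
        + frechet_derivative (\<lambda>z. om c z i j) (at y) k = 0)) \<and>
    (\<forall>c\<in>A. \<forall>i\<in>Basis. \<forall>j\<in>Basis. C_inf (snd c ` fst c) (\<lambda>y. om c y i j)) \<and>
    (\<forall>c\<in>A. \<forall>d\<in>A. \<forall>y\<in>snd c ` (fst c \<inter> fst d). \<forall>u v.
       om c y u v = om d (transition c d y)
          (frechet_derivative (transition c d) (at y) u)
          (frechet_derivative (transition c d) (at y) v))"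

definition smooth_fun :: "('m, 'e::euclidean_space) chart set \<Rightarrow> ('m \<Rightarrow> real) \<Rightarrow> bool" where
  "smooth_fun A f \<longleftrightarrow> (\<forall>c\<in>A. C_inf (snd c ` fst c) (f \<circ> inv_into (fst c) (snd c)))"

text \<open>Poisson bracket, computed in a chart around p:
  {f,g}(p) = om(X_f, X_g) where om(X_f, -) = df.\<close>
definition poisson ::
  "('m, 'e::euclidean_space) chart set \<Rightarrow> (('m, 'e) chart \<Rightarrow> 'e \<Rightarrow> 'e \<Rightarrow> 'e \<Rightarrow> real) \<Rightarrow>
   ('m \<Rightarrow> real) \<Rightarrow> ('m \<Rightarrow> real) \<Rightarrow> 'm \<Rightarrow> real" where
  "poisson A om f g p =
    (let c = (SOME c. c \<in> A \<and> p \<in> fst c); y = snd c p;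
         ham = (\<lambda>h. THE v. \<forall>u. om c y v u =
                   frechet_derivative (h \<circ> inv_into (fst c) (snd c)) (at y) u)
     in om c y (ham f) (ham g))"

definition compact_support :: "('m::topological_space \<Rightarrow> real) \<Rightarrow> bool" where
  "compact_support f \<longleftrightarrow> compact (closure {p. f p \<noteq> 0})"

text \<open>Pb_X(alpha), where the class alpha in [X : S^1] is given by a representative a;
  S^1 is the unit circle in the complex plane (identified with R^2).\<close>
definition Pb ::
  "('m::topological_space, 'e::euclidean_space) chart set \<Rightarrow>
   (('m, 'e) chart \<Rightarrow> 'e \<Rightarrow> 'e \<Rightarrow> 'e \<Rightarrow> real) \<Rightarrow> 'm set \<Rightarrow> ('m \<Rightarrow> complex) \<Rightarrow> ereal" where
  "Pb A om X a = Inf {(SUP p. ereal \<bar>poisson A om f1 f2 p\<bar>) | f1 f2.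
      smooth_fun A f1 \<and> smooth_fun A f2 \<and> compact_support f1 \<and> compact_support f2 \<and>
      (\<forall>p. Complex (f1 p) (f2 p) \<in> cball 0 1) \<and>
      (\<exists>U. open U \<and> X \<subseteq> U \<and> (\<forall>p\<in>U. Complex (f1 p) (f2 p) \<in> sphere 0 1)) \<and>
      homotopic_with_canon (\<lambda>_. True) X (sphere 0 1) (\<lambda>p. Complex (f1 p) (f2 p)) a}"

definition hausdorff_dist :: "'a::metric_space set \<Rightarrow> 'a set \<Rightarrow> ereal" where
  "hausdorff_dist S T =
    (if S = {} \<and> T = {} then 0 else if S = {} \<or> T = {} then \<infinity>
     else max (SUP x\<in>S. ereal (infdist x T)) (SUP y\<in>T. ereal (infdist y S)))"

end

theory Submission
  imports Defs
begin

lemma infdist_lt_ex: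
  fixes x :: "'a::metric_space"
  assumes "X \<noteq> {}" "infdist x X < e"
  shows "\<exists>y\<in>X. dist x y < e"
proof -
  have "(INF a\<in>X. dist x a) < e" using assms by (simp add: infdist_notempty)
  then show ?thesis using assms(1) by (simp add: cINF_less_iff)
qed

lemma key:
  fixes phi b :: "'m::{metric_space,second_countable_topology} \<Rightarrow> complex"
  assumes X: "compact X" "X \<noteq> {}" and W: "open W" "X \<subseteq> W"
    and cphi: "continuous_on W phi" and cb: "continuous_on W b"
    and sphi: "phi ` W \<subseteq> sphere 0 1" and sb: "b ` W \<subseteq> sphere 0 1"
    and hom: "homotopic_with_canon (\<lambda>_. True) X (sphere 0 1) phi b"
  obtains e where "e > 0" "\<And>Y. (\<And>x. x \<in> Y \<Longrightarrow> infdist x X < e) \<Longrightarrow>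
      Y \<subseteq> W \<and> homotopic_with_canon (\<lambda>_. True) Y (sphere 0 1) phi b"
proof -
  obtain h where ch: "continuous_on ({0..1::real} \<times> X) h"
     and hs: "h \<in> ({0..1} \<times> X) \<rightarrow> sphere 0 1"
     and h0: "\<And>x. x \<in> X \<Longrightarrow> h (0, x) = phi x"
     and h1: "\<And>x. x \<in> X \<Longrightarrow> h (1, x) = b x"
    using hom by (force simp: homotopic_with)
  define P0 where "P0 = {0::real} \<times> W"
  define P1 where "P1 = {1::real} \<times> W"
  define PX where "PX = {0..1::real} \<times> X"
  define S where "S = P0 \<union> P1 \<union> PX"
  define f where "f = (\<lambda>(t,x). if x \<in> X then h (t,x) else if t = 0 then phi x else b x)"
  have cX: "closed X" using X compact_imp_closed by blast
  have c0: "continuous_on P0 f"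
  proof (rule continuous_on_eq)
    show "continuous_on P0 (phi \<circ> snd)" unfolding P0_def
      by (rule continuous_on_compose) (auto intro: continuous_intros continuous_on_subset[OF cphi])
    show "\<And>x. x \<in> P0 \<Longrightarrow> (phi \<circ> snd) x = f x" by (auto simp: P0_def f_def h0)
  qed
  have c1: "continuous_on P1 f"
  proof (rule continuous_on_eq)
    show "continuous_on P1 (b \<circ> snd)" unfolding P1_def
      by (rule continuous_on_compose) (auto intro: continuous_intros continuous_on_subset[OF cb])
    show "\<And>x. x \<in> P1 \<Longrightarrow> (b \<circ> snd) x = f x" by (auto simp: P1_def f_def h1)
  qed
  have cXX: "continuous_on PX f"
    unfolding PX_def by (rule continuous_on_eq[OF ch]) (auto simp: f_def)
  have PXsub: "PX \<subseteq> UNIV \<times> W" using W by (auto simp: PX_def)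
  have cl0: "closedin (top_of_set T) P0" if "P0 \<subseteq> T" "T \<subseteq> UNIV \<times> W" for T
    unfolding closedin_closed
    by (rule exI[of _ "{0} \<times> UNIV"]) (use that in \<open>auto simp: P0_def closed_Times\<close>)
  have cl1: "closedin (top_of_set T) P1" if "P1 \<subseteq> T" "T \<subseteq> UNIV \<times> W" for T
    unfolding closedin_closed
    by (rule exI[of _ "{1} \<times> UNIV"]) (use that in \<open>auto simp: P1_def closed_Times\<close>)
  have clX: "closedin (top_of_set T) PX" if "PX \<subseteq> T" for T
    unfolding closedin_closed
    by (rule exI[of _ PX]) (use that cX in \<open>auto simp: PX_def closed_Times\<close>)
  have cf: "continuous_on S f" unfolding S_def
    apply (rule continuous_on_Un_local)
      apply (rule closedin_Un)
       apply (rule cl0) using PXsub apply (auto simp: P0_def P1_def)[2]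
      apply (rule cl1) using PXsub apply (auto simp: P0_def P1_def)[2]
     apply (rule clX) apply blast
    apply (rule continuous_on_Un_local)
       apply (rule cl0) using PXsub apply (auto simp: P0_def P1_def)[2]
      apply (rule cl1) using PXsub apply (auto simp: P0_def P1_def)[2]
    using c0 c1 cXX by auto
  have Ssub: "S \<subseteq> UNIV \<times> W" using PXsub by (auto simp: S_def P0_def P1_def)
  have clS: "closedin (top_of_set (UNIV \<times> W)) S" unfolding S_def
    by (intro closedin_Un cl0 cl1 clX) (use PXsub in \<open>auto simp: P0_def P1_def\<close>)
  obtain g where cg: "continuous_on (UNIV \<times> W) g" and gf: "\<And>x. x \<in> S \<Longrightarrow> g x = f x"
    using Tietze_unbounded[OF cf clS] by blast
  define Op where "Op = g -` (- {0}) \<inter> (UNIV \<times> W)"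
  have oOp: "open Op" unfolding Op_def
    proof -
    have o1: "open (UNIV \<times> W)" using W(1) by (simp add: open_Times)
    have o2: "open (- {0::complex})" by (simp add: open_Compl)
    have "\<forall>B. open B \<longrightarrow> open (g -` B \<inter> (UNIV \<times> W))"
      using continuous_on_open_vimage[OF o1, of g] cg by simp
    then show "open (g -` (- {0}) \<inter> (UNIV \<times> W))" using o2 by simp
  qed
  have KO: "PX \<subseteq> Op"
  proof
    fix p assume p: "p \<in> PX"
    then have "g p = h p" using gf by (auto simp: S_def f_def PX_def split: prod.splits)
    moreover have "h p \<in> sphere 0 1" using hs p by (auto simp: PX_def)
    ultimately show "p \<in> Op" using p PXsub by (auto simp: Op_def)
  qed
  have cK: "compact PX" unfolding PX_def using X by (simp add: compact_Times)
  obtain e where e: "e > 0" "(\<Union>x\<in>PX. ball x e) \<subseteq> Op"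
    using compact_subset_open_imp_ball_epsilon_subset[OF cK oOp KO] by blast
  show ?thesis
  proof (rule that[OF e(1)])
    fix Y assume Y: "\<And>x. x \<in> Y \<Longrightarrow> infdist x X < e"
    have YO: "(t, x) \<in> Op" if xY: "x \<in> Y" and tI: "t \<in> {0..1}" for x t
    proof -
      obtain y where y: "y \<in> X" "dist x y < e" using infdist_lt_ex[OF X(2) Y[OF xY]] by blast
      have "(t,x) \<in> ball (t,y) e" using y by (simp add: dist_Pair_Pair dist_commute)
      moreover have "(t,y) \<in> PX" using y tI by (auto simp: PX_def)
      ultimately show ?thesis using e by blast
    qed
    have YW: "Y \<subseteq> W" using YO[of _ 0] by (auto simp: Op_def)
    define k where "k = (\<lambda>p. g p / complex_of_real (cmod (g p)))"
    have "continuous_on ({0..1} \<times> Y) g"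
      by (rule continuous_on_subset[OF cg]) (use YW in auto)
    then have ck: "continuous_on ({0..1} \<times> Y) k" unfolding k_def
      using YO by (intro continuous_intros) (auto simp: Op_def)
    have ks: "k \<in> ({0..1} \<times> Y) \<rightarrow> sphere 0 1"
      using YO by (auto simp: k_def Op_def norm_divide)
    have k0: "k (0, x) = phi x" if "x \<in> Y" for x
    proof -
      have "(0, x) \<in> S" using YW that by (auto simp: S_def P0_def)
      then have "g (0,x) = phi x" using gf by (auto simp: f_def h0)
      moreover have "cmod (phi x) = 1" using sphi YW that by force
      ultimately show ?thesis by (simp add: k_def)
    qed
    have k1: "k (1, x) = b x" if "x \<in> Y" for x
    proof -
      have "(1, x) \<in> S" using YW that by (auto simp: S_def P1_def)
      then have "g (1,x) = b x" using gf by (auto simp: f_def h1)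
      moreover have "cmod (b x) = 1" using sb YW that by force
      ultimately show ?thesis by (simp add: k_def)
    qed
    have "homotopic_with_canon (\<lambda>_. True) Y (sphere 0 1) phi b"
      using ck ks k0 k1 by (auto simp: homotopic_with intro!: exI[of _ k])
    with YW show "Y \<subseteq> W \<and> homotopic_with_canon (\<lambda>_. True) Y (sphere 0 1) phi b" by blast
  qed
qed

lemma smooth_cont:
  fixes A :: "('a::metric_space, 'e::euclidean_space) chart set"
  assumes "smooth_atlas A" "smooth_fun A f"
  shows "continuous_on UNIV f"
proof -
  have "isCont f p" for p
  proof -
  have "p \<in> (\<Union>c\<in>A. fst c)" using assms(1) by (simp add: smooth_atlas_def)
  then obtain U psi where c: "(U, psi) \<in> A" "p \<in> U" by auto
  then have ch: "is_chart (U, psi)" using assms(1) by (simp add: smooth_atlas_def)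
  then have oU: "open U" and inj: "inj_on psi U" and cpsi: "continuous_on U psi"
    by (auto simp: is_chart_def)
  have "C_inf (psi ` U) (f \<circ> inv_into U psi)"
    using assms(2) c by (force simp: smooth_fun_def)
  then have "(f \<circ> inv_into U psi) differentiable_on (psi ` U)"
    by (cases rule: C_inf.cases) auto
  then have "continuous_on (psi ` U) (f \<circ> inv_into U psi)"
    by (rule differentiable_imp_continuous_on)
  then have "continuous_on U ((f \<circ> inv_into U psi) \<circ> psi)"
    by (rule continuous_on_compose[OF cpsi])
  then have "continuous_on U f"
    by (rule continuous_on_eq) (simp add: inv_into_f_f[OF inj])
  then show "isCont f p" using oU c(2) continuous_on_eq_continuous_at by blast
  qed
  then show ?thesis by (simp add: continuous_at_imp_continuous_on)
qed

lemma hd_eventually: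
  fixes X :: "'a::metric_space set" and Xn :: "nat \<Rightarrow> 'a set"
  assumes lim: "((\<lambda>n. hausdorff_dist (Xn n) X) \<longlongrightarrow> 0) sequentially"
    and X: "X \<noteq> {}" and e: "e > 0"
  shows "eventually (\<lambda>n. \<forall>x\<in>Xn n. infdist x X < e) sequentially"
proof -
  have "eventually (\<lambda>n. hausdorff_dist (Xn n) X < ereal e) sequentially"
    using order_tendstoD(2)[OF lim] e by simp
  then show ?thesis
  proof (rule eventually_mono)
    fix n assume H: "hausdorff_dist (Xn n) X < ereal e"
    show "\<forall>x\<in>Xn n. infdist x X < e"
    proof
      fix x assume x: "x \<in> Xn n"
      then have "hausdorff_dist (Xn n) X = max (SUP x\<in>Xn n. ereal (infdist x X)) (SUP y\<in>X. ereal (infdist y (Xn n)))"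
        using X by (auto simp: hausdorff_dist_def)
      then have "(SUP x\<in>Xn n. ereal (infdist x X)) < ereal e" using H by simp
      moreover have "ereal (infdist x X) \<le> (SUP x\<in>Xn n. ereal (infdist x X))"
        using x by (rule SUP_upper)
      ultimately have "ereal (infdist x X) < ereal e" by (rule le_less_trans[rotated])
      then show "infdist x X < e" by simp
    qed
  qed
qed

lemma hd_empty:
  fixes Xn :: "nat \<Rightarrow> 'a::metric_space set"
  assumes lim: "((\<lambda>n. hausdorff_dist (Xn n) {}) \<longlongrightarrow> 0) sequentially"
  shows "eventually (\<lambda>n. Xn n = {}) sequentially"
proof -
  have "eventually (\<lambda>n. hausdorff_dist (Xn n) {} < ereal 1) sequentially"
    using order_tendstoD(2)[OF lim] by simp
  then show ?thesis
    by (rule eventually_mono) (auto simp: hausdorff_dist_def split: if_splits)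
qed

theorem mainTheorem12:
  fixes A :: "('m::{metric_space, second_countable_topology}, 'e::euclidean_space) chart set"
    and om :: "('m, 'e) chart \<Rightarrow> 'e \<Rightarrow> 'e \<Rightarrow> 'e \<Rightarrow> real"
    and X UX :: "'m set" and Xn :: "nat \<Rightarrow> 'm set"
    and a abar :: "'m \<Rightarrow> complex"
  assumes "symplectic_manifold A om"
    and "compact X"
    and "\<And>n. compact (Xn n)"
    and "\<And>n. Xn (Suc n) \<subseteq> Xn n"
    and "\<And>n. X \<subseteq> Xn n"
    and "((\<lambda>n. hausdorff_dist (Xn n) X) \<longlongrightarrow> 0) sequentially"
    and "continuous_on X a" and "a ` X \<subseteq> sphere 0 1"
    and "open UX" and "X \<subseteq> UX"
    and "continuous_on UX abar" and "abar ` UX \<subseteq> sphere 0 1"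
    and "homotopic_with_canon (\<lambda>_. True) X (sphere 0 1) abar a"
  shows "((\<lambda>n. Pb A om (Xn n) abar) \<longlongrightarrow> Pb A om X a) sequentially"
proof -
  note asm = assms
  have atlas: "smooth_atlas A" using asm(1) by (simp add: symplectic_manifold_def)
  define cond where "cond = (\<lambda>Y b f1 f2.
      smooth_fun A f1 \<and> smooth_fun A f2 \<and> compact_support f1 \<and> compact_support f2 \<and>
      (\<forall>p. Complex (f1 p) (f2 p) \<in> cball 0 1) \<and>
      (\<exists>U. open U \<and> Y \<subseteq> U \<and> (\<forall>p\<in>U. Complex (f1 p) (f2 p) \<in> sphere 0 1)) \<and>
      homotopic_with_canon (\<lambda>_. True) Y (sphere 0 1) (\<lambda>p. Complex (f1 p) (f2 p)) b)"
  define val where "val = (\<lambda>f1 f2. (SUP p. ereal \<bar>poisson A om f1 f2 p\<bar>))"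
  have PbE: "Pb A om Y b = Inf {val f1 f2 | f1 f2. cond Y b f1 f2}" for Y b
    by (simp add: Pb_def cond_def val_def)
  have lower: "Pb A om X a \<le> Pb A om (Xn n) abar" for n
  proof -
    have "{val f1 f2 | f1 f2. cond (Xn n) abar f1 f2} \<subseteq> {val f1 f2 | f1 f2. cond X a f1 f2}"
    proof clarify
      fix f1 f2 assume c: "cond (Xn n) abar f1 f2"
      have "homotopic_with_canon (\<lambda>_. True) X (sphere 0 1) (\<lambda>p. Complex (f1 p) (f2 p)) abar"
        using c asm(5) homotopic_with_subset_left unfolding cond_def by blast
      then have "homotopic_with_canon (\<lambda>_. True) X (sphere 0 1) (\<lambda>p. Complex (f1 p) (f2 p)) a"
        using asm(13) homotopic_with_trans by blast
      moreover have "\<exists>U. open U \<and> X \<subseteq> U \<and> (\<forall>p\<in>U. Complex (f1 p) (f2 p) \<in> sphere 0 1)"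
        using c asm(5) unfolding cond_def by blast
      ultimately have "cond X a f1 f2" using c unfolding cond_def by blast
      then show "\<exists>g1 g2. val f1 f2 = val g1 g2 \<and> cond X a g1 g2" by blast
    qed
    then show ?thesis unfolding PbE by (rule Inf_superset_mono)
  qed
  have upper: "eventually (\<lambda>n. Pb A om (Xn n) abar < y) sequentially" if y: "Pb A om X a < y" for y
  proof -
    obtain v where "v \<in> {val f1 f2 | f1 f2. cond X a f1 f2}" "v < y"
      using y unfolding PbE by (auto simp: Inf_less_iff)
    then obtain f1 f2 where c: "cond X a f1 f2" and vy: "val f1 f2 < y" by blast
    define phi where "phi = (\<lambda>p. Complex (f1 p) (f2 p))"
    obtain U where U: "open U" "X \<subseteq> U" "\<forall>p\<in>U. phi p \<in> sphere 0 1"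
      using c unfolding cond_def phi_def by blast
    have hpa: "homotopic_with_canon (\<lambda>_. True) X (sphere 0 1) phi a"
      using c unfolding cond_def phi_def by blast
    have hpb: "homotopic_with_canon (\<lambda>_. True) X (sphere 0 1) phi abar"
      using homotopic_with_trans[OF hpa homotopic_with_symD[OF asm(13)]] .
    have cphi: "continuous_on UNIV phi" unfolding phi_def
      using smooth_cont[OF atlas, of f1] smooth_cont[OF atlas, of f2] c
      by (intro continuous_intros) (auto simp: cond_def)
    define W where "W = U \<inter> UX"
    have good: "Pb A om Y abar < y" if YW: "Y \<subseteq> W"
      and hY: "homotopic_with_canon (\<lambda>_. True) Y (sphere 0 1) phi abar" for Y
    proof -
      have "cond Y abar f1 f2" using c YW hY U unfolding cond_def phi_def W_def by blast
      then have "Pb A om Y abar \<le> val f1 f2" unfolding PbE by (blast intro: Inf_lower)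
      then show ?thesis using vy by simp
    qed
    show ?thesis
    proof (cases "X = {}")
      case True
      have "eventually (\<lambda>n. Xn n = {}) sequentially"
        using hd_empty asm(6) True by simp
      then show ?thesis
      proof (rule eventually_mono)
        fix n assume "Xn n = {}"
        moreover have "homotopic_with_canon (\<lambda>_. True) {} (sphere 0 1) phi abar"
          by (simp add: homotopic_on_emptyI)
        ultimately show "Pb A om (Xn n) abar < y" using good by simp
      qed
    next
      case False
      obtain e where e: "e > 0" and ee: "\<And>Y. (\<And>x. x \<in> Y \<Longrightarrow> infdist x X < e) \<Longrightarrow>
          Y \<subseteq> W \<and> homotopic_with_canon (\<lambda>_. True) Y (sphere 0 1) phi abar"
      proof (rule key[of X W phi abar])
        show "compact X" "X \<noteq> {}" by (fact asm(2)) (fact False)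
        show "open W" "X \<subseteq> W" using U asm(9,10) by (auto simp: W_def)
        show "continuous_on W phi" using cphi by (rule continuous_on_subset) simp
        show "continuous_on W abar" using asm(11) by (rule continuous_on_subset) (auto simp: W_def)
        show "phi ` W \<subseteq> sphere 0 1" using U by (auto simp: W_def)
        show "abar ` W \<subseteq> sphere 0 1" using asm(12) by (auto simp: W_def)
        show "homotopic_with_canon (\<lambda>_. True) X (sphere 0 1) phi abar" by (fact hpb)
      qed blast
      show ?thesis
        using hd_eventually[OF asm(6) False e]
      proof (rule eventually_mono)
        fix n assume "\<forall>x\<in>Xn n. infdist x X < e"
        then have "Xn n \<subseteq> W \<and> homotopic_with_canon (\<lambda>_. True) (Xn n) (sphere 0 1) phi abar"
          using ee by blast
        then show "Pb A om (Xn n) abar < y" using good by blast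
      qed
    qed
  qed
  show ?thesis
  proof (rule order_tendstoI)
    fix y assume "y < Pb A om X a"
    then show "eventually (\<lambda>n. y < Pb A om (Xn n) abar) sequentially"
      using lower less_le_trans by (intro always_eventually) blast
  next
    fix y assume "Pb A om X a < y"
    then show "eventually (\<lambda>n. Pb A om (Xn n) abar < y) sequentially" by (rule upper)
  qed
qed

end
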